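(* Let $d\ge1$, $\lambda>0$, $\delta>0$, and let $f:\mathbb{R}^d\to\mathbb{R}$ satisfy: (A1) $f$ is continuous and has at least one minimizer; (A2) $\int_{\mathbb{R}^d}\exp(-f(y)/\delta)\,dy<+\infty$. Assume that $f^{\lambda,\delta}$ is convex and let $X^\star_{\lambda,\delta}:=\operatorname{argmin}f^{\lambda,\delta}$. Then there exists a convex function $H_{\lambda,\delta}:\mathbb{R}^d\to\mathbb{R}$ such that $\operatorname{zprox}^\delta_{\lambda,f}=\operatorname{prox}_{\lambda\delta H_{\lambda,\delta}}$; in particular $\operatorname{zprox}^\delta_{\lambda,f}$ is firmly nonexpansive. Moreover, the ZOPPA sequence $(x^k)_{k\in\mathbb{N}}$ converges to some $x^\star_{\lambda,\delta}\in X^\star_{\lambda,\delta}$, and for every $k\ge1$, \[f^{\lambda,\delta}(x^k)-\min f^{\lambda,\delta}\le\frac{\operatorname{dist}(x^0,X^\star_{\lambda,\delta})^2}{2\lambda k},\qquad \|\nabla f^{\lambda,\delta}(x^k)\|\le\frac{2\operatorname{dist}(x^0,X^\star_{\lambda,\delta})}{\lambda(k+1)}.\]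
   Context: The zeroth-order proximal operator is $\operatorname{zprox}^\delta_{\lambda,f}(x)=\dfrac{\mathbb{E}_{y\sim\mathcal N(x,\lambda\delta I)}[y\exp(-f(y)/\delta)]}{\mathbb{E}_{y\sim\mathcal N(x,\lambda\delta I)}[\exp(-f(y)/\delta)]}$; the soft Moreau envelope is $f^{\lambda,\delta}(x)=-\delta\log\mathbb{E}_{y\sim\mathcal N(x,\lambda\delta I)}[\exp(-f(y)/\delta)]$. For $g:\mathbb{R}^d\to\mathbb{R}$ and $t>0$, $\operatorname{prox}_{tg}(x)=\operatorname{argmin}_y\{t g(y)+\frac12\|y-x\|^2\}$. An operator $T$ is firmly nonexpansive if $\|Tx-Ty\|^2\le\langle Tx-Ty,x-y\rangle$ for all $x,y$. ZOPPA: given $x^0\in\mathbb{R}^d$, iterate $x^{k+1}=\operatorname{zprox}^\delta_{\lambda,f}(x^k)$. *)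

theory Defs
  imports "HOL-Analysis.Analysis"
begin

definition gauss_density :: "real \<Rightarrow> 'a::euclidean_space \<Rightarrow> 'a \<Rightarrow> real" where
  "gauss_density s x y = (2 * pi * s) powr (- real DIM('a) / 2) * exp (- (norm (y - x))\<^sup>2 / (2 * s))"

definition gauss_expect :: "real \<Rightarrow> 'a::euclidean_space \<Rightarrow> ('a \<Rightarrow> 'b::{banach,second_countable_topology}) \<Rightarrow> 'b" where
  "gauss_expect s x g = (\<integral> y. gauss_density s x y *\<^sub>R g y \<partial>lborel)"

definition zprox :: "real \<Rightarrow> real \<Rightarrow> ('a::euclidean_space \<Rightarrow> real) \<Rightarrow> 'a \<Rightarrow> 'a" where
  "zprox del lam f x =
     (1 / gauss_expect (lam * del) x (\<lambda>y. exp (- f y / del))) *\<^sub>R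
       gauss_expect (lam * del) x (\<lambda>y. exp (- f y / del) *\<^sub>R y)"

definition soft_moreau :: "real \<Rightarrow> real \<Rightarrow> ('a::euclidean_space \<Rightarrow> real) \<Rightarrow> 'a \<Rightarrow> real" where
  "soft_moreau lam del f x = - del * ln (gauss_expect (lam * del) x (\<lambda>y. exp (- f y / del)))"

definition prox :: "real \<Rightarrow> ('a::real_normed_vector \<Rightarrow> real) \<Rightarrow> 'a \<Rightarrow> 'a" where
  "prox t g x = (THE y. \<forall>z. t * g y + (norm (y - x))\<^sup>2 / 2 \<le> t * g z + (norm (z - x))\<^sup>2 / 2)"

definition firmly_nonexpansive :: "('a::real_inner \<Rightarrow> 'a) \<Rightarrow> bool" where
  "firmly_nonexpansive T \<longleftrightarrow> (\<forall>x y. (norm (T x - T y))\<^sup>2 \<le> inner (T x - T y) (x - y))"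

definition argmin_set :: "('a \<Rightarrow> real) \<Rightarrow> 'a set" where
  "argmin_set F = {x. \<forall>y. F x \<le> F y}"

definition zoppa :: "real \<Rightarrow> real \<Rightarrow> ('a::euclidean_space \<Rightarrow> real) \<Rightarrow> 'a \<Rightarrow> nat \<Rightarrow> 'a" where
  "zoppa del lam f x0 k = (zprox del lam f ^^ k) x0"

end

theory Submission
  imports Defs
begin


lemma norm_sq_diff_scale: "(norm (a - c *\<^sub>R b))\<^sup>2 = (norm a)\<^sup>2 - 2*c*inner b a + c*(c*(norm b)\<^sup>2)"
  for a b :: "'a::real_inner"
  by (simp add: power2_norm_eq_inner inner_diff_left inner_diff_right algebra_simps inner_commute)

lemma norm_sq_ident: "(norm z)\<^sup>2 - (norm x)\<^sup>2 - (norm (z - x))\<^sup>2 = 2 * inner x (z - x)"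
  for x z :: "'a::real_inner"
  by (simp add: power2_norm_eq_inner inner_diff_left inner_diff_right algebra_simps inner_commute)

lemma prox_ident: "inner (x - T) (y - T) + ((norm (y - x))\<^sup>2 - (norm (T - x))\<^sup>2) / 2 = (norm (y - T))\<^sup>2 / 2"
  for x y T :: "'a::real_inner"
proof -
  have "(norm (y - x))\<^sup>2 = (norm (y - T))\<^sup>2 + 2 * inner (y - T) (T - x) + (norm (T - x))\<^sup>2"
  proof -
    have "y - x = (y - T) + (T - x)" by simp
    then show ?thesis by (metis power2_norm_eq_inner inner_add_left inner_add_right inner_commute mult_2 add.assoc)
  qed
  moreover have "inner (x - T) (y - T) = - inner (y - T) (T - x)"
    by (metis inner_commute inner_minus_left minus_diff_eq)
  ultimately show ?thesis by (simp add: field_simps)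
qed

lemma e_ident: "(norm (q - T))\<^sup>2 / 2 - (norm q)\<^sup>2 / 2 = - inner T q + (norm T)\<^sup>2 / 2" for q T :: "'a::real_inner"
proof -
  have "(norm (q - T))\<^sup>2 = (norm q)\<^sup>2 - 2 * inner T q + (norm T)\<^sup>2"
    by (simp add: power2_norm_eq_inner inner_diff_left inner_diff_right inner_commute)
  then show ?thesis by linarith
qed

locale smooth_cvx =
  fixes phi :: "'a::euclidean_space \<Rightarrow> real" and g :: "'a \<Rightarrow> 'a" and lam :: real
  assumes lam_pos: "lam > 0"
  and cvx: "convex_on UNIV phi"
  and desc: "\<And>x z. phi z \<le> phi x + inner (g x) (z - x) + (norm (z - x))\<^sup>2 / (2*lam)"
begin

lemma lowquad: "phi y \<ge> phi x + inner (g x) (y - x) - (norm (y - x))\<^sup>2 / (2*lam)"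
proof -
  have "phi x \<le> (1/2) * phi y + (1/2) * phi (2 *\<^sub>R x - y)"
  proof -
    have "phi ((1/2) *\<^sub>R y + (1/2) *\<^sub>R (2 *\<^sub>R x - y)) \<le> (1/2) * phi y + (1/2) * phi (2 *\<^sub>R x - y)"
      using convex_onD[OF cvx, of "1/2" y "2 *\<^sub>R x - y"] by simp
    moreover have "(1/2) *\<^sub>R y + (1/2) *\<^sub>R (2 *\<^sub>R x - y) = x" by (simp add: algebra_simps)
    ultimately show ?thesis by simp
  qed
  moreover have "phi (2 *\<^sub>R x - y) \<le> phi x + inner (g x) (x - y) + (norm (x - y))\<^sup>2 / (2*lam)"
    using desc[where x=x and z="2 *\<^sub>R x - y"] by (simp add: algebra_simps scaleR_2)
  moreover have "inner (g x) (x - y) = - inner (g x) (y - x)" by (simp add: inner_diff_right)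
  moreover have "(norm (x - y))\<^sup>2 / (2*lam) = (norm (y - x))\<^sup>2 / (2*lam)" by (simp add: norm_minus_commute)
  ultimately show ?thesis by linarith
qed

lemma absquad: "\<bar>phi y - phi x - inner (g x) (y - x)\<bar> \<le> (norm (y - x))\<^sup>2 / (2*lam)"
  using lowquad[where x=x and y=y] desc[where x=x and z=y] by linarith

lemma deriv: "(phi has_derivative (\<lambda>h. inner (g x) h)) (at x)"
  unfolding has_derivative_iff_norm
proof
  show "bounded_linear (inner (g x))" by (rule bounded_linear_inner_right)
  show "((\<lambda>y. norm (phi y - phi x - inner (g x) (y - x)) / norm (y - x)) \<longlongrightarrow> 0) (at x)"
  proof (rule tendsto_sandwich[where f="\<lambda>_. 0" and h="\<lambda>y. norm (y - x) / (2*lam)"])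
    show "\<forall>\<^sub>F y in at x. 0 \<le> norm (phi y - phi x - inner (g x) (y - x)) / norm (y - x)" by simp
    show "\<forall>\<^sub>F y in at x. norm (phi y - phi x - inner (g x) (y - x)) / norm (y - x) \<le> norm (y - x) / (2*lam)"
    proof (rule always_eventually, rule allI)
      fix y
      show "norm (phi y - phi x - inner (g x) (y - x)) / norm (y - x) \<le> norm (y - x) / (2*lam)"
      proof (cases "y = x")
        case True then show ?thesis by simp
      next
        case False
        then have np: "norm (y - x) > 0" by simp
        have "norm (phi y - phi x - inner (g x) (y - x)) \<le> (norm (y - x))\<^sup>2 / (2*lam)"
          using absquad[where y=y and x=x] by simp
        then show ?thesis using np lam_pos by (simp add: divide_simps power2_eq_square)
      qed
    qed
    show "((\<lambda>_. 0) \<longlongrightarrow> (0::real)) (at x)" by simp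
    have "((\<lambda>y. norm (y - x) / (2*lam)) \<longlongrightarrow> norm (x - x) / (2*lam)) (at x)"
      using lam_pos by (intro tendsto_intros) auto
    then show "((\<lambda>y. norm (y - x) / (2*lam)) \<longlongrightarrow> 0) (at x)" using lam_pos by simp
  qed
qed

lemma cont: "continuous_on UNIV phi"
  by (meson continuous_at_imp_continuous_on deriv has_derivative_continuous)

lemma grad_ineq: "phi z \<ge> phi x + inner (g x) (z - x)"
proof (rule ccontr)
  assume na: "\<not> phi z \<ge> phi x + inner (g x) (z - x)"
  define h where "h = z - x"
  define e where "e = inner (g x) h - (phi z - phi x)"
  define c where "c = (norm h)\<^sup>2 / (2*lam)"
  have e: "e > 0" using na unfolding e_def h_def by simp
  have c: "c \<ge> 0" unfolding c_def using lam_pos by simp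
  define t where "t = min 1 (e / (2*c + 1))"
  have t0: "t > 0" unfolding t_def using e c by simp
  have t1: "t \<le> 1" unfolding t_def by simp
  have tc: "t * c < e"
  proof -
    have "t \<le> e / (2*c + 1)" unfolding t_def by simp
    then have "t * c \<le> e / (2*c + 1) * c" using c by (rule mult_right_mono)
    also have "\<dots> = e * (c / (2*c+1))" by simp
    also have "\<dots> < e * 1" using e c by (intro mult_strict_left_mono) auto
    finally show ?thesis by simp
  qed
  have "phi ((1 - t) *\<^sub>R x + t *\<^sub>R z) \<le> (1 - t) * phi x + t * phi z"
    using convex_onD[OF cvx, of t x z] t0 t1 by simp
  moreover have "(1 - t) *\<^sub>R x + t *\<^sub>R z = x + t *\<^sub>R h" unfolding h_def by (simp add: algebra_simps)
  moreover have "phi (x + t *\<^sub>R h) \<ge> phi x + inner (g x) (t *\<^sub>R h) - (norm (t *\<^sub>R h))\<^sup>2 / (2*lam)"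
    using lowquad[where y="x + t *\<^sub>R h" and x=x] by simp
  moreover have "(norm (t *\<^sub>R h))\<^sup>2 / (2*lam) = t * (t * c)"
    unfolding c_def using t0 by (simp add: power2_eq_square)
  ultimately have "phi x + t * inner (g x) h - t * (t * c) \<le> (1 - t) * phi x + t * phi z" by simp
  then have "t * (inner (g x) h - t * c) \<le> t * (phi z - phi x)" by (simp add: algebra_simps)
  then have "inner (g x) h - t * c \<le> phi z - phi x" using t0 by simp
  then show False using tc unfolding e_def by simp
qed

lemma cocoercive: "phi z \<ge> phi x + inner (g x) (z - x) + lam * (norm (g z - g x))\<^sup>2 / 2"
proof -
  define d where "d = g z - g x"
  define v where "v = - lam *\<^sub>R d"
  have a: "phi (z + v) \<le> phi z + inner (g z) v + (norm v)\<^sup>2 / (2*lam)"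
    using desc[where x=z and z="z + v"] by simp
  have b: "phi (z + v) \<ge> phi x + inner (g x) (z + v - x)"
    by (rule grad_ineq)
  have nv: "(norm v)\<^sup>2 / (2*lam) = lam * (norm d)\<^sup>2 / 2"
    unfolding v_def using lam_pos by (simp add: power2_eq_square)
  have iv0: "inner (g z) v - inner (g x) v = inner d v" unfolding d_def by (simp add: inner_diff_left)
  have iv: "inner (g z) v - inner (g x) v = - (lam * (norm d)\<^sup>2)"
    unfolding iv0 unfolding v_def by (simp add: power2_norm_eq_inner)
  have "inner (g x) (z + v - x) = inner (g x) (z - x) + inner (g x) v"
    by (simp add: inner_add_right inner_diff_right)
  then show ?thesis using a b nv iv unfolding d_def[symmetric] by linarith
qed

lemma monotone_g: "inner (g z - g x) (z - x) \<ge> lam * (norm (g z - g x))\<^sup>2"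
proof -
  have 1: "phi z \<ge> phi x + inner (g x) (z - x) + lam * (norm (g z - g x))\<^sup>2 / 2" by (rule cocoercive)
  have 2: "phi x \<ge> phi z + inner (g z) (x - z) + lam * (norm (g z - g x))\<^sup>2 / 2"
    using cocoercive[where x=z and z=x] by (simp add: norm_minus_commute)
  have "inner (g z) (x - z) = - inner (g z) (z - x)" by (simp add: inner_diff_right)
  moreover have "inner (g z - g x) (z - x) = inner (g z) (z - x) - inner (g x) (z - x)" by (simp add: inner_diff_left)
  ultimately show ?thesis using 1 2 by linarith
qed

definition Top where "Top x = x - lam *\<^sub>R g x"

lemma fne: "firmly_nonexpansive Top"
  unfolding firmly_nonexpansive_def
proof (intro allI)
  fix x y :: 'a
  define a where "a = x - y"
  define b where "b = g x - g y"
  have tt: "Top x - Top y = a - lam *\<^sub>R b" unfolding Top_def a_def b_def by (simp add: algebra_simps)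
  have m: "inner b a \<ge> lam * (norm b)\<^sup>2" unfolding a_def b_def by (rule monotone_g)
  have "(norm (a - lam *\<^sub>R b))\<^sup>2 = (norm a)\<^sup>2 - 2 * lam * inner a b + lam * (lam * (norm b)\<^sup>2)"
    by (simp add: power2_norm_eq_inner inner_diff_left inner_diff_right algebra_simps inner_commute)
  moreover have "inner (a - lam *\<^sub>R b) a = (norm a)\<^sup>2 - lam * inner a b"
    by (simp add: power2_norm_eq_inner inner_diff_left inner_diff_right inner_commute)
  moreover have "lam * (lam * (norm b)\<^sup>2) \<le> lam * inner a b"
    using m lam_pos by (simp add: inner_commute)
  ultimately show "(norm (Top x - Top y))\<^sup>2 \<le> inner (Top x - Top y) (x - y)"
    unfolding tt a_def[symmetric] by linarith
qed

lemma nonexp: "norm (Top x - Top y) \<le> norm (x - y)"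
proof -
  have "(norm (Top x - Top y))\<^sup>2 \<le> inner (Top x - Top y) (x - y)" using fne unfolding firmly_nonexpansive_def by blast
  also have "\<dots> \<le> norm (Top x - Top y) * norm (x - y)" by (rule norm_cauchy_schwarz)
  finally have "norm (Top x - Top y) * norm (Top x - Top y) \<le> norm (Top x - Top y) * norm (x - y)"
    by (simp add: power2_eq_square)
  then show ?thesis
    by (cases "norm (Top x - Top y) = 0") (auto simp: mult_le_cancel_left)
qed

lemma g_min: assumes "\<forall>y. phi m \<le> phi y" shows "g m = 0"
proof -
  have a: "phi (m - lam *\<^sub>R g m) \<le> phi m + inner (g m) (- lam *\<^sub>R g m) + (norm (- lam *\<^sub>R g m))\<^sup>2 / (2*lam)"
    using desc[where x=m and z="m - lam *\<^sub>R g m"] by simp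
  have b: "inner (g m) (- lam *\<^sub>R g m) = - (lam * (norm (g m))\<^sup>2)" by (simp add: power2_norm_eq_inner)
  have c: "(norm (- lam *\<^sub>R g m))\<^sup>2 / (2*lam) = lam * (norm (g m))\<^sup>2 / 2"
    using lam_pos by (simp add: power2_eq_square)
  have "phi m \<le> phi (m - lam *\<^sub>R g m)" using assms by blast
  then have "lam * (norm (g m))\<^sup>2 \<le> 0" using a b c by linarith
  then have "(norm (g m))\<^sup>2 \<le> 0" using lam_pos by (simp add: mult_le_0_iff)
  then show ?thesis by simp
qed

lemma step_desc: "phi (Top x) \<le> phi x - lam * (norm (g x))\<^sup>2 / 2"
proof -
  have a: "phi (x - lam *\<^sub>R g x) \<le> phi x + inner (g x) (- lam *\<^sub>R g x) + (norm (- lam *\<^sub>R g x))\<^sup>2 / (2*lam)"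
    using desc[where x=x and z="x - lam *\<^sub>R g x"] by simp
  have b: "inner (g x) (- lam *\<^sub>R g x) = - (lam * (norm (g x))\<^sup>2)" by (simp add: power2_norm_eq_inner)
  have c: "(norm (- lam *\<^sub>R g x))\<^sup>2 / (2*lam) = lam * (norm (g x))\<^sup>2 / 2"
    using lam_pos by (simp add: power2_eq_square)
  show ?thesis using a b c unfolding Top_def by linarith
qed

lemma step_fejer:
  assumes m: "\<forall>y. phi m \<le> phi y"
  shows "2 * lam * (phi x - phi m) \<le> (norm (x - m))\<^sup>2 - (norm (Top x - m))\<^sup>2"
proof -
  have gm: "g m = 0" using g_min[OF m] .
  have co: "phi m \<ge> phi x + inner (g x) (m - x) + lam * (norm (g m - g x))\<^sup>2 / 2" by (rule cocoercive)
  have i1: "inner (g x) (m - x) = - inner (g x) (x - m)" by (simp add: inner_diff_right)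
  have n1: "(norm (g m - g x))\<^sup>2 = (norm (g x))\<^sup>2" using gm by simp
  have n2: "lam * (norm (g m - g x))\<^sup>2 / 2 = lam * (norm (g x))\<^sup>2 / 2" using n1 by simp
  have h: "phi x - phi m \<le> inner (g x) (x - m) - lam * (norm (g x))\<^sup>2 / 2"
    using co i1 n2 by linarith
  have "2 * lam * (phi x - phi m) \<le> 2 * lam * (inner (g x) (x - m) - lam * (norm (g x))\<^sup>2 / 2)"
    using h lam_pos by (intro mult_left_mono) auto
  also have "\<dots> = 2 * lam * inner (g x) (x - m) - lam * (lam * (norm (g x))\<^sup>2)"
    by (simp add: algebra_simps)
  also have "\<dots> = (norm (x - m))\<^sup>2 - (norm (Top x - m))\<^sup>2"
  proof -
    have e: "Top x - m = (x - m) - lam *\<^sub>R g x" unfolding Top_def by simp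
    have "(norm (Top x - m))\<^sup>2 = (norm (x - m))\<^sup>2 - 2 * lam * inner (g x) (x - m) + lam * (lam * (norm (g x))\<^sup>2)"
      unfolding e by (rule norm_sq_diff_scale)
    then show ?thesis by simp
  qed
  finally show ?thesis .
qed

lemma grad_mono: "norm (g (Top x)) \<le> norm (g x)"
proof -
  have e1: "Top x - Top (Top x) = lam *\<^sub>R g (Top x)" unfolding Top_def[of "Top x"] by simp
  have e2: "x - Top x = lam *\<^sub>R g x" unfolding Top_def by simp
  have "norm (Top x - Top (Top x)) \<le> norm (x - Top x)" by (rule nonexp)
  then have "lam * norm (g (Top x)) \<le> lam * norm (g x)" unfolding e1 e2 using lam_pos by simp
  then show ?thesis using lam_pos by simp
qed

lemma iter_Suc: "(Top ^^ Suc k) x0 = Top ((Top ^^ k) x0)" by simp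

lemma val_bound:
  assumes m: "\<forall>y. phi m \<le> phi y"
  shows "real (k+1) * (phi ((Top ^^ k) x0) - phi m) + (norm ((Top ^^ Suc k) x0 - m))\<^sup>2 / (2*lam)
         \<le> (norm (x0 - m))\<^sup>2 / (2*lam)"
proof (induction k)
  case 0
  have "2 * lam * (phi x0 - phi m) \<le> (norm (x0 - m))\<^sup>2 - (norm (Top x0 - m))\<^sup>2" by (rule step_fejer[OF m])
  then have "phi x0 - phi m \<le> ((norm (x0 - m))\<^sup>2 - (norm (Top x0 - m))\<^sup>2) / (2*lam)"
    using lam_pos by (simp add: field_simps)
  then show ?case by (simp add: diff_divide_distrib)
next
  case (Suc k)
  define y where "y = (Top ^^ k) x0"
  have IH: "real (k+1) * (phi y - phi m) + (norm (Top y - m))\<^sup>2 / (2*lam) \<le> (norm (x0 - m))\<^sup>2 / (2*lam)"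
    using Suc.IH unfolding y_def by simp
  have "2 * lam * (phi (Top y) - phi m) \<le> (norm (Top y - m))\<^sup>2 - (norm (Top (Top y) - m))\<^sup>2" by (rule step_fejer[OF m])
  then have f: "phi (Top y) - phi m \<le> (norm (Top y - m))\<^sup>2 / (2*lam) - (norm (Top (Top y) - m))\<^sup>2 / (2*lam)"
    using lam_pos by (simp add: field_simps)
  have d: "phi (Top y) \<le> phi y" using step_desc[of y] lam_pos by (smt (verit) mult_nonneg_nonneg zero_le_power2 divide_nonneg_pos)
  have "real (k+1) * (phi (Top y) - phi m) \<le> real (k+1) * (phi y - phi m)"
    using d by (intro mult_left_mono) auto
  then have "real (Suc k + 1) * (phi (Top y) - phi m) + (norm (Top (Top y) - m))\<^sup>2 / (2*lam) \<le> (norm (x0 - m))\<^sup>2 / (2*lam)"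
    using IH f by (simp add: algebra_simps)
  then show ?case unfolding y_def by simp
qed

lemma grad_sum:
  "phi ((Top ^^ (m + j + 1)) x0) + real (j+1) * (lam * (norm (g ((Top ^^ (m + j)) x0)))\<^sup>2 / 2) \<le> phi ((Top ^^ m) x0)"
proof (induction j)
  case 0
  show ?case using step_desc[of "(Top ^^ m) x0"] by simp
next
  case (Suc j)
  define y where "y = (Top ^^ (m + j)) x0"
  have IH: "phi (Top y) + real (j+1) * (lam * (norm (g y))\<^sup>2 / 2) \<le> phi ((Top ^^ m) x0)"
    using Suc.IH unfolding y_def by simp
  have sd: "phi (Top (Top y)) \<le> phi (Top y) - lam * (norm (g (Top y)))\<^sup>2 / 2" by (rule step_desc)
  have gm: "norm (g (Top y)) \<le> norm (g y)" by (rule grad_mono)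
  then have "(norm (g (Top y)))\<^sup>2 \<le> (norm (g y))\<^sup>2" by (simp add: power_mono)
  then have "lam * (norm (g (Top y)))\<^sup>2 / 2 \<le> lam * (norm (g y))\<^sup>2 / 2" using lam_pos by simp
  then have "real (j+1) * (lam * (norm (g (Top y)))\<^sup>2 / 2) \<le> real (j+1) * (lam * (norm (g y))\<^sup>2 / 2)"
    by (intro mult_left_mono) auto
  moreover have "real (Suc j + 1) * (lam * (norm (g (Top y)))\<^sup>2 / 2) = real (j + 1) * (lam * (norm (g (Top y)))\<^sup>2 / 2) + lam * (norm (g (Top y)))\<^sup>2 / 2"
    by (simp add: algebra_simps)
  ultimately have "phi (Top (Top y)) + real (Suc j + 1) * (lam * (norm (g (Top y)))\<^sup>2 / 2) \<le> phi ((Top ^^ m) x0)"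
    using IH sd by linarith
  moreover have "(Top ^^ (m + Suc j + 1)) x0 = Top (Top y)" unfolding y_def by simp
  moreover have "(Top ^^ (m + Suc j)) x0 = Top y" unfolding y_def by simp
  ultimately show ?case by simp
qed

lemma nat_ineq: "(k+1)^2 \<le> 4 * ((k div 2) + 1) * ((k - k div 2) + 1)" for k :: nat
proof -
  have "k = 2*(k div 2) \<or> k = 2*(k div 2)+1" by presburger
  then obtain n where "k = 2*n \<or> k = 2*n+1" by blast
  then show ?thesis by (auto simp: power2_eq_square algebra_simps)
qed

lemma grad_bound:
  assumes m: "\<forall>y. phi m \<le> phi y"
  shows "norm (g ((Top ^^ k) x0)) \<le> 2 * norm (x0 - m) / (lam * (real k + 1))"
proof -
  define a where "a = k div 2"
  define j where "j = k - a"
  have kaj: "k = a + j" unfolding j_def a_def by simp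
  define N where "N = (norm (g ((Top ^^ k) x0)))\<^sup>2"
  define P where "P = phi ((Top ^^ a) x0) - phi m"
  define R2 where "R2 = (norm (x0 - m))\<^sup>2"
  have gs: "phi ((Top ^^ (a + j + 1)) x0) + real (j+1) * (lam * N / 2) \<le> phi ((Top ^^ a) x0)"
    using grad_sum[of a j] unfolding N_def kaj by simp
  have "phi m \<le> phi ((Top ^^ (a + j + 1)) x0)" using m by blast
  then have h1: "real (j+1) * (lam * N / 2) \<le> P" using gs unfolding P_def by linarith
  have vb: "real (a+1) * P + (norm ((Top ^^ Suc a) x0 - m))\<^sup>2 / (2*lam) \<le> R2 / (2*lam)"
    using val_bound[OF m, of a] unfolding P_def R2_def by simp
  have "0 \<le> (norm ((Top ^^ Suc a) x0 - m))\<^sup>2 / (2*lam)" using lam_pos by simp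
  then have h2: "real (a+1) * P \<le> R2 / (2*lam)" using vb by linarith
  have "real (a+1) * (real (j+1) * (lam * N / 2)) \<le> real (a+1) * P"
    using h1 by (intro mult_left_mono) auto
  then have "real (a+1) * (real (j+1) * (lam * N / 2)) \<le> R2 / (2*lam)" using h2 by linarith
  then have "2 * lam * (real (a+1) * (real (j+1) * (lam * N / 2))) \<le> 2 * lam * (R2 / (2*lam))"
    using lam_pos by (intro mult_left_mono) auto
  then have h3: "(real (a+1) * real (j+1)) * (lam^2 * N) \<le> R2"
    using lam_pos by (simp add: power2_eq_square algebra_simps)
  have "real ((k+1)^2) \<le> real (4 * (a + 1) * (j + 1))"
    using nat_ineq[of k] unfolding a_def j_def by linarith
  moreover have "real ((k+1)^2) = (real k + 1)^2" by simp
  moreover have "real (4 * (a + 1) * (j + 1)) = 4 * (real (a+1) * real (j+1))" by (simp add: algebra_simps)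
  ultimately have h4: "(real k + 1)^2 \<le> 4 * (real (a+1) * real (j+1))" by linarith
  have "(real k + 1)^2 * (lam^2 * N) \<le> 4 * (real (a+1) * real (j+1)) * (lam^2 * N)"
    using h4 by (intro mult_right_mono) (auto simp: N_def)
  also have "\<dots> \<le> 4 * R2" using h3 by simp
  finally have fin: "(real k + 1)^2 * (lam^2 * N) \<le> 4 * R2" .
  have e1: "(norm (g ((Top ^^ k) x0)) * (lam * (real k + 1)))\<^sup>2 = (real k + 1)^2 * (lam^2 * N)"
    unfolding N_def by (simp add: power_mult_distrib)
  have e2: "(2 * norm (x0 - m))\<^sup>2 = 4 * R2" unfolding R2_def by (simp add: power_mult_distrib)
  have "(norm (g ((Top ^^ k) x0)) * (lam * (real k + 1)))\<^sup>2 \<le> (2 * norm (x0 - m))\<^sup>2"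
    unfolding e1 e2 by (rule fin)
  then have "norm (g ((Top ^^ k) x0)) * (lam * (real k + 1)) \<le> 2 * norm (x0 - m)"
    by (rule power2_le_imp_le) simp
  moreover have pos: "lam * (real k + 1) > 0" using lam_pos by simp
  ultimately show ?thesis by (subst pos_le_divide_eq[OF pos])
qed

lemma fejer_mono:
  assumes m: "\<forall>y. phi m \<le> phi y"
  shows "norm (Top x - m) \<le> norm (x - m)"
proof -
  have "2 * lam * (phi x - phi m) \<le> (norm (x - m))\<^sup>2 - (norm (Top x - m))\<^sup>2" by (rule step_fejer[OF m])
  moreover have "0 \<le> 2 * lam * (phi x - phi m)" using m lam_pos by simp
  ultimately have "(norm (Top x - m))\<^sup>2 \<le> (norm (x - m))\<^sup>2" by linarith
  then show ?thesis by (rule power2_le_imp_le) simp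
qed

lemma gd_main:
  assumes ex: "\<exists>m. \<forall>y. phi m \<le> phi y"
  shows "(\<exists>xs \<in> argmin_set phi. (\<lambda>k. (Top ^^ k) x0) \<longlonglongrightarrow> xs)
    \<and> (\<forall>k::nat. k \<ge> 1 \<longrightarrow> phi ((Top ^^ k) x0) - (INF y. phi y)
           \<le> (infdist x0 (argmin_set phi))\<^sup>2 / (2 * lam * real k))
    \<and> (\<forall>k::nat. k \<ge> 1 \<longrightarrow> norm (g ((Top ^^ k) x0)) \<le> 2 * infdist x0 (argmin_set phi) / (lam * (real k + 1)))"
proof -
  obtain m0 where m0: "\<forall>y. phi m0 \<le> phi y" using ex by blast
  have Aeq: "argmin_set phi = {x. phi x \<le> phi m0}"
    unfolding argmin_set_def using m0 by (auto intro: order_trans)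
  have Acl: "closed (argmin_set phi)" unfolding Aeq
    by (rule closed_Collect_le) (auto intro: cont continuous_on_const)
  have Ane: "argmin_set phi \<noteq> {}" using m0 unfolding argmin_set_def by blast
  obtain m where mA: "m \<in> argmin_set phi" and mclose: "\<And>y. y \<in> argmin_set phi \<Longrightarrow> dist x0 m \<le> dist x0 y"
    using distance_attains_inf[OF Acl Ane, of x0] by blast
  have m: "\<forall>y. phi m \<le> phi y" using mA unfolding argmin_set_def by blast
  have infd: "infdist x0 (argmin_set phi) = norm (x0 - m)"
  proof -
    have "infdist x0 (argmin_set phi) \<le> dist x0 m" by (rule infdist_le[OF mA])
    moreover have "dist x0 m \<le> infdist x0 (argmin_set phi)"
      unfolding infdist_notempty[OF Ane] by (rule cINF_greatest[OF Ane mclose])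
    ultimately show ?thesis by (simp add: dist_norm)
  qed
  have inf: "(INF y. phi y) = phi m" by (rule cInf_eq_minimum) (use m in auto)
  define X where "X k = (Top ^^ k) x0" for k
  have XS: "X (Suc k) = Top (X k)" for k unfolding X_def by simp
  have vb: "phi (X k) - phi m \<le> (norm (x0 - m))\<^sup>2 / (2 * lam * real (k+1))" for k
  proof -
    have "real (k+1) * (phi (X k) - phi m) + (norm (X (Suc k) - m))\<^sup>2 / (2*lam) \<le> (norm (x0 - m))\<^sup>2 / (2*lam)"
      using val_bound[OF m, of k] unfolding X_def by simp
    moreover have "0 \<le> (norm (X (Suc k) - m))\<^sup>2 / (2*lam)" using lam_pos by simp
    ultimately have "real (k+1) * (phi (X k) - phi m) \<le> (norm (x0 - m))\<^sup>2 / (2*lam)" by linarith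
    then have "(real (k+1) * (phi (X k) - phi m)) / real (k+1) \<le> (norm (x0 - m))\<^sup>2 / (2*lam) / real (k+1)"
      by (rule divide_right_mono) simp
    then show ?thesis by simp
  qed
  have part2: "\<forall>k::nat. k \<ge> 1 \<longrightarrow> phi ((Top ^^ k) x0) - (INF y. phi y)
           \<le> (infdist x0 (argmin_set phi))\<^sup>2 / (2 * lam * real k)"
  proof (intro allI impI)
    fix k :: nat assume k: "k \<ge> 1"
    have "phi (X k) - phi m \<le> (norm (x0 - m))\<^sup>2 / (2 * lam * real (k+1))" by (rule vb)
    also have "\<dots> \<le> (norm (x0 - m))\<^sup>2 / (2 * lam * real k)"
      using k lam_pos by (intro divide_left_mono) auto
    finally show "phi ((Top ^^ k) x0) - (INF y. phi y) \<le> (infdist x0 (argmin_set phi))\<^sup>2 / (2 * lam * real k)"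
      unfolding inf infd X_def .
  qed
  have part3: "\<forall>k::nat. k \<ge> 1 \<longrightarrow> norm (g ((Top ^^ k) x0)) \<le> 2 * infdist x0 (argmin_set phi) / (lam * (real k + 1))"
    unfolding infd using grad_bound[OF m] by blast
  have fej: "norm (X (Suc k) - y) \<le> norm (X k - y)" if "y \<in> argmin_set phi" for k y
    unfolding XS using fejer_mono that unfolding argmin_set_def by blast
  have fejn: "norm (X k - y) \<le> norm (X n - y)" if "y \<in> argmin_set phi" "n \<le> k" for k n y
  proof -
    have "decseq (\<lambda>k. norm (X k - y))" by (rule decseq_SucI) (rule fej[OF that(1)])
    from decseqD[OF this that(2)] show ?thesis by simp
  qed
  have "bounded (range X)"
    unfolding bounded_iff
  proof (intro exI ballI)
    fix z assume "z \<in> range X"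
    then obtain k where z: "z = X k" by blast
    have "norm (X k - m) \<le> norm (X 0 - m)" using fejn[OF mA] by simp
    then have "norm (X k) \<le> norm (X 0 - m) + norm m" by (metis add.commute norm_triangle_sub order_trans add_le_cancel_left)
    then show "norm z \<le> norm (X 0 - m) + norm m" using z by simp
  qed
  then obtain l r where r: "strict_mono r" and lim: "(X \<circ> r) \<longlonglongrightarrow> l"
    using bounded_imp_convergent_subsequence by blast
  have philim: "(\<lambda>k. phi (X k)) \<longlonglongrightarrow> phi m"
  proof (rule tendsto_sandwich[where f="\<lambda>_. phi m" and h="\<lambda>k. phi m + (norm (x0 - m))\<^sup>2 / (2 * lam * real (k+1))"])
    show "\<forall>\<^sub>F k in sequentially. phi m \<le> phi (X k)" using m by simp
    show "\<forall>\<^sub>F k in sequentially. phi (X k) \<le> phi m + (norm (x0 - m))\<^sup>2 / (2 * lam * real (k+1))"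
      using vb by (simp add: algebra_simps)
    show "(\<lambda>_. phi m) \<longlonglongrightarrow> phi m" by simp
    have "(\<lambda>k. (norm (x0 - m))\<^sup>2 / (2 * lam) * inverse (real (Suc k))) \<longlonglongrightarrow> (norm (x0 - m))\<^sup>2 / (2 * lam) * 0"
      by (intro tendsto_intros LIMSEQ_inverse_real_of_nat)
    then have "(\<lambda>k. (norm (x0 - m))\<^sup>2 / (2 * lam * real (k+1))) \<longlonglongrightarrow> 0"
      by (simp add: field_simps)
    then show "(\<lambda>k. phi m + (norm (x0 - m))\<^sup>2 / (2 * lam * real (k+1))) \<longlonglongrightarrow> phi m"
      using tendsto_add[OF tendsto_const[of "phi m"]] by fastforce
  qed
  have "(\<lambda>k. phi (X (r k))) \<longlonglongrightarrow> phi m" using LIMSEQ_subseq_LIMSEQ[OF philim r] by (simp add: o_def)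
  moreover have "(\<lambda>k. phi (X (r k))) \<longlonglongrightarrow> phi l"
    using continuous_on_tendsto_compose[OF cont lim] by (simp add: o_def)
  ultimately have "phi l = phi m" using LIMSEQ_unique by blast
  then have lA: "l \<in> argmin_set phi" using m unfolding argmin_set_def by simp
  have "X \<longlonglongrightarrow> l"
  proof (rule LIMSEQ_I)
    fix e :: real assume e: "e > 0"
    from lim have "\<exists>N. \<forall>n\<ge>N. norm ((X \<circ> r) n - l) < e" using LIMSEQ_D e by blast
    then obtain N where N: "norm (X (r N) - l) < e" by auto
    show "\<exists>no. \<forall>n\<ge>no. norm (X n - l) < e"
    proof (intro exI allI impI)
      fix n assume "r N \<le> n"
      then have "norm (X n - l) \<le> norm (X (r N) - l)" by (rule fejn[OF lA])
      then show "norm (X n - l) < e" using N by linarith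
    qed
  qed
  then have part1: "\<exists>xs \<in> argmin_set phi. (\<lambda>k. (Top ^^ k) x0) \<longlonglongrightarrow> xs"
    using lA unfolding X_def by blast
  show ?thesis using part1 part2 part3 by blast
qed

definition psi where "psi x = (norm x)\<^sup>2 / 2 - lam * phi x"

lemma psi_low: "psi z \<ge> psi x + inner (Top x) (z - x)"
proof -
  have "lam * phi z \<le> lam * (phi x + inner (g x) (z - x) + (norm (z - x))\<^sup>2 / (2*lam))"
    using desc[where x=x and z=z] lam_pos by (intro mult_left_mono) auto
  also have "\<dots> = lam * phi x + lam * inner (g x) (z - x) + (norm (z - x))\<^sup>2 / 2"
    using lam_pos by (simp add: algebra_simps)
  finally have a: "lam * phi z \<le> lam * phi x + lam * inner (g x) (z - x) + (norm (z - x))\<^sup>2 / 2" .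
  have b: "(norm z)\<^sup>2 - (norm x)\<^sup>2 - (norm (z - x))\<^sup>2 = 2 * inner x (z - x)" by (rule norm_sq_ident)
  have c: "inner (Top x) (z - x) = inner x (z - x) - lam * inner (g x) (z - x)"
    unfolding Top_def by (simp add: inner_diff_left)
  show ?thesis unfolding psi_def using a b c by linarith
qed

lemma psi_up: "psi z \<le> psi x + inner (Top x) (z - x) + (norm (z - x))\<^sup>2 / 2"
proof -
  have "lam * (phi x + inner (g x) (z - x)) \<le> lam * phi z"
    using grad_ineq[of x z] lam_pos by (intro mult_left_mono) auto
  then have a: "lam * phi x + lam * inner (g x) (z - x) \<le> lam * phi z" by (simp add: algebra_simps)
  have b: "(norm z)\<^sup>2 - (norm x)\<^sup>2 - (norm (z - x))\<^sup>2 = 2 * inner x (z - x)" by (rule norm_sq_ident)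
  have c: "inner (Top x) (z - x) = inner x (z - x) - lam * inner (g x) (z - x)"
    unfolding Top_def by (simp add: inner_diff_left)
  show ?thesis unfolding psi_def using a b c by linarith
qed

definition xp where "xp p = (SOME x. Top x = p)"
definition cH where "cH p = inner (xp p) p - psi (xp p) - (norm p)\<^sup>2 / 2"

context
  assumes surj: "\<And>p. \<exists>x. Top x = p"
begin

lemma xp: "Top (xp p) = p"
  unfolding xp_def using someI_ex[OF surj] .

lemma key: "inner (xp q) q - psi (xp q) \<ge> inner x q - psi x + (norm (q - Top x))\<^sup>2 / 2"
proof -
  define z where "z = x + (q - Top x)"
  have u: "psi z \<le> psi x + inner (Top x) (q - Top x) + (norm (q - Top x))\<^sup>2 / 2"
    using psi_up[of z x] unfolding z_def by simp
  have l: "psi z \<ge> psi (xp q) + inner q (z - xp q)"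
    using psi_low[of "xp q" z] unfolding xp .
  have i1: "inner q (z - xp q) = inner z q - inner (xp q) q" by (simp add: inner_diff_right inner_commute)
  have i2: "inner z q = inner x q + inner (q - Top x) q" unfolding z_def by (simp add: inner_add_left)
  have i3: "inner (q - Top x) q - inner (Top x) (q - Top x) = (norm (q - Top x))\<^sup>2"
    by (simp add: power2_norm_eq_inner inner_diff_left inner_diff_right inner_commute)
  show ?thesis using u l i1 i2 i3 by linarith
qed

lemma key_eq: assumes "Top x = q" shows "inner (xp q) q - psi (xp q) = inner x q - psi x"
proof -
  have "inner (xp q) q - psi (xp q) \<ge> inner x q - psi x" using key[where q=q and x=x] assms by simp
  moreover have "psi (xp q) \<ge> psi x + inner (Top x) (xp q - x)" by (rule psi_low)
  moreover have "inner (Top x) (xp q - x) = inner (xp q) q - inner x q"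
    using assms by (simp add: inner_diff_right inner_commute)
  ultimately show ?thesis by linarith
qed

definition aff where "aff x q = inner (x - Top x) q - psi x + (norm (Top x))\<^sup>2 / 2"

lemma cH_ge: "cH q \<ge> aff x q"
proof -
  have k: "inner (xp q) q - psi (xp q) \<ge> inner x q - psi x + (norm (q - Top x))\<^sup>2 / 2" by (rule key)
  have e: "(norm (q - Top x))\<^sup>2 / 2 - (norm q)\<^sup>2 / 2 = - inner (Top x) q + (norm (Top x))\<^sup>2 / 2"
    by (rule e_ident)
  have e2: "inner (x - Top x) q = inner x q - inner (Top x) q" by (simp add: inner_diff_left)
  show ?thesis unfolding cH_def aff_def using k e e2 by linarith
qed

lemma cH_eq: assumes "Top x = q" shows "cH q = aff x q"
proof -
  have k: "inner (xp q) q - psi (xp q) = inner x q - psi x" by (rule key_eq[OF assms])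
  have e: "(norm (q - Top x))\<^sup>2 / 2 - (norm q)\<^sup>2 / 2 = - inner (Top x) q + (norm (Top x))\<^sup>2 / 2"
    by (rule e_ident)
  have e2: "inner (x - Top x) q = inner x q - inner (Top x) q" by (simp add: inner_diff_left)
  have z: "(norm (q - Top x))\<^sup>2 = 0" using assms by simp
  show ?thesis unfolding cH_def aff_def using k e e2 z by linarith
qed

lemma cH_convex: "convex_on UNIV cH"
proof (rule convex_onI)
  fix t :: real and p q :: 'a assume t: "0 < t" "t < 1"
  define r where "r = (1 - t) *\<^sub>R p + t *\<^sub>R q"
  define x where "x = xp r"
  have "cH r = aff x r" unfolding x_def by (rule cH_eq[OF xp])
  also have "\<dots> = (1 - t) * aff x p + t * aff x q"
  proof -
    define K where "K = - psi x + (norm (Top x))\<^sup>2 / 2"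
    define v where "v = x - Top x"
    have af: "aff x w = inner v w + K" for w unfolding aff_def K_def v_def by simp
    have "inner v r = (1-t) * inner v p + t * inner v q" unfolding r_def by (simp add: inner_add_right)
    then show ?thesis unfolding af by (simp add: algebra_simps)
  qed
  also have "\<dots> \<le> (1 - t) * cH p + t * cH q"
    using t cH_ge[of x p] cH_ge[of x q] by (intro add_mono mult_left_mono) auto
  finally show "cH ((1 - t) *\<^sub>R p + t *\<^sub>R q) \<le> (1 - t) * cH p + t * cH q" unfolding r_def .
qed auto

lemma obj_ge: "cH y + (norm (y - x))\<^sup>2 / 2 \<ge> cH (Top x) + (norm (Top x - x))\<^sup>2 / 2 + (norm (y - Top x))\<^sup>2 / 2"
proof -
  have a: "cH y \<ge> aff x y" by (rule cH_ge)
  have b: "cH (Top x) = aff x (Top x)" by (rule cH_eq) simp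
  have c: "aff x y - aff x (Top x) = inner (x - Top x) (y - Top x)"
    unfolding aff_def by (simp add: inner_diff_right)
  have d: "inner (x - Top x) (y - Top x) + ((norm (y - x))\<^sup>2 - (norm (Top x - x))\<^sup>2) / 2 = (norm (y - Top x))\<^sup>2 / 2"
    by (rule prox_ident)
  show ?thesis using a b c d unfolding diff_divide_distrib by linarith
qed

lemma prox_eq: assumes c: "c > 0" shows "prox c (\<lambda>p. cH p / c) = Top"
proof
  fix x
  have cc: "\<And>p. c * (cH p / c) = cH p" using c by simp
  show "prox c (\<lambda>p. cH p / c) x = Top x"
    unfolding prox_def cc
  proof (rule the_equality)
    show "\<forall>z. cH (Top x) + (norm (Top x - x))\<^sup>2 / 2 \<le> cH z + (norm (z - x))\<^sup>2 / 2"
    proof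
      fix z
      have "cH z + (norm (z - x))\<^sup>2 / 2 \<ge> cH (Top x) + (norm (Top x - x))\<^sup>2 / 2 + (norm (z - Top x))\<^sup>2 / 2"
        by (rule obj_ge)
      moreover have "0 \<le> (norm (z - Top x))\<^sup>2 / 2" by simp
      ultimately show "cH (Top x) + (norm (Top x - x))\<^sup>2 / 2 \<le> cH z + (norm (z - x))\<^sup>2 / 2" by linarith
    qed
  next
    fix y assume "\<forall>z. cH y + (norm (y - x))\<^sup>2 / 2 \<le> cH z + (norm (z - x))\<^sup>2 / 2"
    then have "cH y + (norm (y - x))\<^sup>2 / 2 \<le> cH (Top x) + (norm (Top x - x))\<^sup>2 / 2" by blast
    with obj_ge[where y=y and x=x] have "(norm (y - Top x))\<^sup>2 \<le> 0" by linarith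
    then show "y = Top x" by simp
  qed
qed

end

end



lemma exp_neg_mult_le: "r * exp (- (r\<^sup>2 / (2*c))) \<le> 1 + 2*c" if "c > 0" "r \<ge> 0" for r c :: real
proof -
  define u where "u = r\<^sup>2 / (2*c)"
  have u0: "u \<ge> 0" unfolding u_def using that by simp
  have r2: "r\<^sup>2 = 2 * c * u" unfolding u_def using that by simp
  have "r \<le> 1 + r\<^sup>2"
  proof (cases "r \<le> 1")
    case True
    have "0 \<le> r\<^sup>2" by simp
    then show ?thesis using True by linarith
  next
    case False
    then have "r * 1 \<le> r * r" by (intro mult_left_mono) auto
    then show ?thesis by (simp add: power2_eq_square)
  qed
  also have "\<dots> = 1 + 2 * c * u" by (simp add: r2)
  finally have r: "r \<le> 1 + 2 * c * u" .
  have e1: "exp (- u) \<le> 1" using u0 by simp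
  have "u \<le> exp u" using exp_ge_add_one_self[of u] by linarith
  then have e2: "u * exp (- u) \<le> 1" by (simp add: exp_minus field_simps)
  have "r * exp (- u) \<le> (1 + 2 * c * u) * exp (- u)" using r by (intro mult_right_mono) auto
  also have "\<dots> = exp (- u) + 2 * c * (u * exp (- u))" by (simp add: algebra_simps)
  also have "\<dots> \<le> 1 + 2 * c * 1" using e1 e2 that by (intro add_mono mult_left_mono) auto
  finally show ?thesis unfolding u_def by simp
qed

locale zset =
  fixes f :: "'a::euclidean_space \<Rightarrow> real" and lam del :: real
  assumes lam: "lam > 0" and del: "del > 0"
  and fc: "continuous_on UNIV f" and fmin: "\<exists>xm. \<forall>y. f xm \<le> f y"
  and A2: "integrable lborel (\<lambda>y. exp (- f y / del))"
begin

definition "s = lam * del"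
definition "w y = exp (- f y / del)"

lemma s_pos: "s > 0" unfolding s_def using lam del by simp
lemma w_pos: "w y > 0" unfolding w_def by simp
lemma w_cont: "continuous_on UNIV w" unfolding w_def using del by (intro continuous_intros fc) auto
lemma w_int: "integrable lborel w" using A2 unfolding w_def[abs_def] .
lemma w_bound: obtains W where "\<And>y. w y \<le> W"
proof -
  obtain xm where xm: "\<forall>y. f xm \<le> f y" using fmin by blast
  have "w y \<le> exp (- f xm / del)" for y unfolding w_def using xm del by (simp add: divide_right_mono)
  then show ?thesis using that by blast
qed

definition "Kc (x::'a) = (2 * pi * s) powr (- real DIM('a) / 2)"

lemma Kc_pos: "Kc x > 0" unfolding Kc_def using s_pos by simp

lemma gd_eq: "gauss_density s x y = Kc x * exp (- (norm (y - x))\<^sup>2 / (2 * s))"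
  unfolding gauss_density_def Kc_def ..

lemma gd_pos: "gauss_density s (x::'a) y > 0" unfolding gd_eq using Kc_pos by simp
lemma gd_le: "gauss_density s x y \<le> Kc x" unfolding gd_eq using Kc_pos s_pos by simp
lemma gd_cont: "continuous_on UNIV (\<lambda>y. gauss_density s (x::'a) y)"
  unfolding gd_eq using s_pos by (intro continuous_intros) auto

lemma int1: "integrable lborel (\<lambda>y. gauss_density s x y * w y)"
proof (rule Bochner_Integration.integrable_bound[where f="\<lambda>y. Kc x * w y"])
  show "integrable lborel (\<lambda>y. Kc x * w y)" using w_int by simp
  show "(\<lambda>y. gauss_density s x y * w y) \<in> borel_measurable lborel"
    using borel_measurable_continuous_onI[OF continuous_on_mult[OF gd_cont w_cont]] by simp
  show "AE y in lborel. norm (gauss_density s x y * w y) \<le> norm (Kc x * w y)"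
  proof (rule AE_I2)
    fix y
    have "\<bar>gauss_density s x y * w y\<bar> = gauss_density s x y * w y"
      using gd_pos[of x y] w_pos[of y] by simp
    also have "\<dots> \<le> Kc x * w y" using gd_le[of x y] w_pos[of y] by (intro mult_right_mono) auto
    also have "\<dots> = \<bar>Kc x * w y\<bar>" using Kc_pos[of x] w_pos[of y] by simp
    finally show "norm (gauss_density s x y * w y) \<le> norm (Kc x * w y)" by simp
  qed
qed

lemma gd_norm_bound: "gauss_density s x y * norm y \<le> Kc x * (norm x + 1 + 2 * s)"
proof -
  define r where "r = norm (y - x)"
  have ny: "norm y \<le> norm x + r" unfolding r_def by (metis norm_triangle_sub add.commute)
  have E: "exp (- r\<^sup>2 / (2 * s)) \<le> 1" using s_pos by simp
  have "exp (- r\<^sup>2 / (2 * s)) * norm y \<le> exp (- r\<^sup>2 / (2 * s)) * (norm x + r)"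
    using ny by (intro mult_left_mono) auto
  also have "\<dots> = exp (- r\<^sup>2 / (2 * s)) * norm x + r * exp (- (r\<^sup>2 / (2 * s)))" by (simp add: algebra_simps)
  also have "\<dots> \<le> 1 * norm x + (1 + 2 * s)"
    using E exp_neg_mult_le[OF s_pos, of r] unfolding r_def by (intro add_mono mult_right_mono) auto
  finally have "exp (- r\<^sup>2 / (2 * s)) * norm y \<le> norm x + 1 + 2 * s" by simp
  then have "Kc x * (exp (- r\<^sup>2 / (2 * s)) * norm y) \<le> Kc x * (norm x + 1 + 2 * s)"
    using Kc_pos[of x] by (intro mult_left_mono) (auto simp: less_imp_le)
  then show ?thesis unfolding gd_eq r_def by (simp add: mult.assoc)
qed

lemma int2: "integrable lborel (\<lambda>y. gauss_density s x y *\<^sub>R (w y *\<^sub>R y))"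
proof -
  have i: "integrable lborel (\<lambda>y. (Kc x * (norm x + 1 + 2 * s)) * w y)" using w_int by simp
  have m: "(\<lambda>y. gauss_density s x y *\<^sub>R (w y *\<^sub>R y)) \<in> borel_measurable lborel"
  proof -
    have "continuous_on UNIV (\<lambda>y. gauss_density s x y *\<^sub>R (w y *\<^sub>R y))"
      by (intro continuous_intros gd_cont w_cont)
    from borel_measurable_continuous_onI[OF this] show ?thesis by simp
  qed
  have a: "AE y in lborel. norm (gauss_density s x y *\<^sub>R (w y *\<^sub>R y)) \<le> norm ((Kc x * (norm x + 1 + 2 * s)) * w y)"
  proof (rule AE_I2)
    fix y
    have "norm (gauss_density s x y *\<^sub>R (w y *\<^sub>R y)) = (gauss_density s x y * norm y) * w y"
      using gd_pos[of x y] w_pos[of y] by (simp add: abs_of_pos)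
    also have "\<dots> \<le> (Kc x * (norm x + 1 + 2 * s)) * w y"
      using gd_norm_bound w_pos[of y] by (intro mult_right_mono) (auto simp: less_imp_le)
    also have "\<dots> = norm ((Kc x * (norm x + 1 + 2 * s)) * w y)"
    proof -
      have "0 \<le> (Kc x * (norm x + 1 + 2 * s)) * w y" using Kc_pos[of x] s_pos w_pos[of y] by simp
      then show ?thesis by simp
    qed
    finally show "norm (gauss_density s x y *\<^sub>R (w y *\<^sub>R y)) \<le> norm ((Kc x * (norm x + 1 + 2 * s)) * w y)" .
  qed
  show ?thesis by (rule Bochner_Integration.integrable_bound[OF i m a])
qed

definition "Z x = gauss_expect s x w"
definition "N x = gauss_expect s x (\<lambda>y. w y *\<^sub>R y)"

lemma Z_eq: "Z x = (\<integral>y. gauss_density s x y * w y \<partial>lborel)"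
  unfolding Z_def gauss_expect_def by simp

lemma Z_pos: "Z x > 0"
proof -
  have nn0: "\<And>y. 0 \<le> gauss_density s x y * w y" by (meson gd_pos w_pos less_imp_le mult_nonneg_nonneg)
  then have nn: "0 \<le> Z x" unfolding Z_eq by (simp add: integral_nonneg)
  have "Z x \<noteq> 0"
  proof
    assume "Z x = 0"
    moreover have "AE y in lborel. 0 \<le> gauss_density s x y * w y"
      using nn0 by simp
    ultimately have "AE y in lborel. gauss_density s x y * w y = 0"
      unfolding Z_eq using integral_nonneg_eq_0_iff_AE[OF int1] by blast
    then obtain NN where NN: "{y \<in> space lborel. \<not> gauss_density s x y * w y = 0} \<subseteq> NN"
      "emeasure lborel NN = 0" "NN \<in> sets lborel" by (rule AE_E)
    have "y \<in> NN" for y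
    proof -
      have "gauss_density s x y * w y \<noteq> 0" using gd_pos[of x y] w_pos[of y] by simp
      then show ?thesis using NN(1) by auto
    qed
    then have "UNIV \<subseteq> NN" by auto
    then have "emeasure lborel (UNIV :: 'a set) \<le> emeasure lborel NN"
      using NN(3) by (intro emeasure_mono) auto
    then show False using NN(2) by simp
  qed
  then show ?thesis using nn by simp
qed

lemma N_eq: "N x = (\<integral>y. gauss_density s x y *\<^sub>R (w y *\<^sub>R y) \<partial>lborel)"
  unfolding N_def gauss_expect_def ..

definition "T x = zprox del lam f x"
definition "phi x = soft_moreau lam del f x"
definition "g x = (1 / lam) *\<^sub>R (x - T x)"

lemma T_eq: "T x = (1 / Z x) *\<^sub>R N x"
  unfolding T_def zprox_def Z_def N_def s_def w_def[abs_def] ..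

lemma phi_eq: "phi x = - del * ln (Z x)"
  unfolding phi_def soft_moreau_def Z_def s_def w_def[abs_def] ..

lemma NZT: "N x = Z x *\<^sub>R T x"
  unfolding T_eq using Z_pos[of x] by simp

lemma gd_shift: "gauss_density s (z::'a) y = gauss_density s x y * exp ((inner (y - x) (z - x) - (norm (z - x))\<^sup>2 / 2) / s)"
proof -
  define h where "h = z - x"
  have yz: "y - z = (y - x) - h" unfolding h_def by simp
  have n: "(norm (y - z))\<^sup>2 = (norm (y - x))\<^sup>2 - 2 * inner (y - x) h + (norm h)\<^sup>2"
    unfolding yz by (simp add: power2_norm_eq_inner inner_diff_left inner_diff_right inner_commute)
  have "- (norm (y - z))\<^sup>2 / (2 * s) = - (norm (y - x))\<^sup>2 / (2 * s) + (inner (y - x) h - (norm h)\<^sup>2 / 2) / s"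
    unfolding n using s_pos by (simp add: field_simps)
  then have "exp (- (norm (y - z))\<^sup>2 / (2 * s)) = exp (- (norm (y - x))\<^sup>2 / (2 * s)) * exp ((inner (y - x) h - (norm h)\<^sup>2 / 2) / s)"
    by (simp add: exp_add[symmetric])
  then show ?thesis unfolding gd_eq h_def Kc_def by simp
qed

lemma exp_tangent: "exp u \<ge> exp a * (1 + (u - a))" for u a :: real
proof -
  have "exp u = exp a * exp (u - a)" by (simp add: exp_add[symmetric])
  moreover have "1 + (u - a) \<le> exp (u - a)" by (rule exp_ge_add_one_self)
  ultimately show ?thesis by (simp add: mult_left_mono)
qed

lemma Z_lower: "Z z \<ge> exp ((inner (T x - x) (z - x) - (norm (z - x))\<^sup>2 / 2) / s) * Z x"
proof -
  define h where "h = z - x"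
  define a where "a = (inner (T x - x) h - (norm h)\<^sup>2 / 2) / s"
  define F where "F y = gauss_density s x y * w y" for y
  have Fnn: "F y \<ge> 0" for y unfolding F_def using gd_pos[of x y] w_pos[of y] by simp
  have pw: "gauss_density s z y * w y \<ge> exp a * F y + (exp a / s) * (inner (gauss_density s x y *\<^sub>R (w y *\<^sub>R y)) h - inner (T x) h * F y)" for y
  proof -
    define u where "u = (inner (y - x) h - (norm h)\<^sup>2 / 2) / s"
    have gz: "gauss_density s z y * w y = F y * exp u" unfolding F_def u_def h_def using gd_shift[of z y x] by simp
    have ua: "u - a = inner (y - T x) h / s" unfolding u_def a_def using s_pos
      by (simp add: field_simps inner_diff_left)
    have "F y * exp u \<ge> F y * (exp a * (1 + (u - a)))" using Fnn[of y] exp_tangent[of a u] by (intro mult_left_mono) auto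
    moreover have "F y * (exp a * (1 + (u - a))) = exp a * F y + (exp a / s) * (inner (gauss_density s x y *\<^sub>R (w y *\<^sub>R y)) h - inner (T x) h * F y)"
      unfolding ua F_def using s_pos by (simp add: inner_diff_left field_simps)
    ultimately show ?thesis using gz by simp
  qed
  have iF: "integrable lborel F" unfolding F_def[abs_def] by (rule int1)
  have i2: "integrable lborel (\<lambda>y. inner (gauss_density s x y *\<^sub>R (w y *\<^sub>R y)) h)"
    using int2[of x] by (rule integrable_inner_left)
  have iR: "integrable lborel (\<lambda>y. exp a * F y + (exp a / s) * (inner (gauss_density s x y *\<^sub>R (w y *\<^sub>R y)) h - inner (T x) h * F y))"
  proof -
    have i4: "integrable lborel (\<lambda>y. inner (T x) h * F y)" using iF by simp
    have "integrable lborel (\<lambda>y. inner (gauss_density s x y *\<^sub>R (w y *\<^sub>R y)) h - inner (T x) h * F y)"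
      by (rule Bochner_Integration.integrable_diff[OF i2 i4])
    then have i5: "integrable lborel (\<lambda>y. (exp a / s) * (inner (gauss_density s x y *\<^sub>R (w y *\<^sub>R y)) h - inner (T x) h * F y))"
      by simp
    have i6: "integrable lborel (\<lambda>y. exp a * F y)" using iF by simp
    show ?thesis by (rule Bochner_Integration.integrable_add[OF i6 i5])
  qed
  have "(\<integral>y. exp a * F y + (exp a / s) * (inner (gauss_density s x y *\<^sub>R (w y *\<^sub>R y)) h - inner (T x) h * F y) \<partial>lborel)
      = exp a * Z x + (exp a / s) * (inner (N x) h - inner (T x) h * Z x)"
  proof -
    have zf: "integral\<^sup>L lborel F = Z x" unfolding Z_eq F_def ..
    have nf: "(\<integral>y. inner (gauss_density s x y *\<^sub>R (w y *\<^sub>R y)) h \<partial>lborel) = inner (N x) h"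
      unfolding N_eq by (rule integral_inner_left) (use int2[of x] in blast)
    have "(\<integral>y. exp a * F y + (exp a / s) * (inner (gauss_density s x y *\<^sub>R (w y *\<^sub>R y)) h - inner (T x) h * F y) \<partial>lborel)
        = exp a * integral\<^sup>L lborel F + (exp a / s) * ((\<integral>y. inner (gauss_density s x y *\<^sub>R (w y *\<^sub>R y)) h \<partial>lborel) - inner (T x) h * integral\<^sup>L lborel F)"
      using iF i2 by (simp add: integral_add integral_diff integral_mult_right)
    then show ?thesis unfolding zf nf .
  qed
  also have "\<dots> = exp a * Z x" unfolding NZT by simp
  finally have eqR: "(\<integral>y. exp a * F y + (exp a / s) * (inner (gauss_density s x y *\<^sub>R (w y *\<^sub>R y)) h - inner (T x) h * F y) \<partial>lborel) = exp a * Z x" .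
  have "exp a * Z x \<le> Z z"
    unfolding eqR[symmetric] Z_eq[of z]
    by (rule integral_mono[OF iR int1]) (use pw in auto)
  then show ?thesis unfolding a_def h_def by simp
qed

lemma descent: "phi z \<le> phi x + inner (g x) (z - x) + (norm (z - x))\<^sup>2 / (2*lam)"
proof -
  define h where "h = z - x"
  define a where "a = (inner (T x - x) h - (norm h)\<^sup>2 / 2) / s"
  have zl: "exp a * Z x \<le> Z z" using Z_lower[where z=z and x=x] unfolding a_def h_def by simp
  have pos: "0 < exp a * Z x" using Z_pos[of x] by simp
  have "ln (exp a * Z x) \<le> ln (Z z)" using ln_le_cancel_iff[OF pos Z_pos[of z]] zl by blast
  then have "a + ln (Z x) \<le> ln (Z z)" using Z_pos[of x] by (simp add: ln_mult)
  then have "del * (a + ln (Z x)) \<le> del * ln (Z z)" using del by (intro mult_left_mono) auto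
  then have p: "phi z \<le> phi x - del * a" unfolding phi_eq by (simp add: algebra_simps)
  have dd: "del * (X / (lam * del)) = X / lam" for X using del lam by (simp add: divide_simps)
  have da: "del * a = (inner (T x - x) h - (norm h)\<^sup>2 / 2) / lam"
    unfolding a_def s_def by (rule dd)
  have gi: "inner (g x) h = inner (x - T x) h / lam" unfolding g_def by simp
  have "inner (x - T x) h = - inner (T x - x) h" by (simp add: inner_diff_left)
  then have "phi x - del * a = phi x + inner (g x) h + (norm h)\<^sup>2 / (2 * lam)"
    unfolding da gi using lam by (simp add: field_simps)
  then show ?thesis using p unfolding h_def by simp
qed

lemma Kc_const: "Kc x = Kc y" unfolding Kc_def ..


lemma Z_vanish:
  assumes xs: "\<And>n. norm (xs n) \<ge> real n"
  shows "(\<lambda>n. Z (xs n :: 'a)) \<longlonglongrightarrow> 0"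
proof -
  have lim: "AE y in lborel. (\<lambda>n. gauss_density s (xs n) y * w y) \<longlonglongrightarrow> 0"
  proof (rule AE_I2)
    fix y :: 'a
    have rl: "filterlim (\<lambda>n. (norm (y - xs n))\<^sup>2 / (2 * s)) at_top sequentially"
      unfolding filterlim_at_top
    proof
      fix Zb :: real
      define q where "q = max 1 (2 * s * Zb)"
      obtain N :: nat where N: "q + norm y \<le> real N" using real_arch_simple by blast
      show "\<forall>\<^sub>F n in sequentially. Zb \<le> (norm (y - xs n))\<^sup>2 / (2 * s)"
        unfolding eventually_sequentially
      proof (intro exI allI impI)
        fix n assume "N \<le> n"
        then have "real N \<le> real n" by simp
        moreover have "norm (xs n) - norm y \<le> norm (y - xs n)"
          by (metis norm_minus_commute norm_triangle_ineq2)
        ultimately have qn: "q \<le> norm (y - xs n)" using N xs[of n] by linarith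
        have q1: "1 \<le> q" unfolding q_def by simp
        have "norm (y - xs n) * 1 \<le> norm (y - xs n) * norm (y - xs n)"
          using qn q1 by (intro mult_left_mono) auto
        then have "2 * s * Zb \<le> (norm (y - xs n))\<^sup>2" using qn unfolding q_def power2_eq_square by linarith
        then show "Zb \<le> (norm (y - xs n))\<^sup>2 / (2 * s)" using s_pos by (simp add: field_simps)
      qed
    qed
    have "filterlim (\<lambda>n. - ((norm (y - xs n))\<^sup>2 / (2 * s))) at_bot sequentially"
      using rl by (simp add: filterlim_uminus_at_top[symmetric])
    from filterlim_compose[OF exp_at_bot this]
    have "((\<lambda>n. exp (- (norm (y - xs n))\<^sup>2 / (2 * s))) \<longlongrightarrow> 0) sequentially"
      by simp
    then have "((\<lambda>n. Kc y * exp (- (norm (y - xs n))\<^sup>2 / (2 * s)) * w y) \<longlongrightarrow> Kc y * 0 * w y) sequentially"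
      by (intro tendsto_intros)
    moreover have "(\<lambda>n. gauss_density s (xs n) y * w y) = (\<lambda>n. Kc y * exp (- (norm (y - xs n))\<^sup>2 / (2 * s)) * w y)"
    proof
      fix n
      show "gauss_density s (xs n) y * w y = Kc y * exp (- (norm (y - xs n))\<^sup>2 / (2 * s)) * w y"
        unfolding gd_eq using Kc_const[of "xs n" y] by simp
    qed
    ultimately show "(\<lambda>n. gauss_density s (xs n) y * w y) \<longlonglongrightarrow> 0" by simp
  qed
  have m1: "(\<lambda>y. 0::real) \<in> borel_measurable lborel" by simp
  have m2: "\<And>n. (\<lambda>y. gauss_density s (xs n) y * w y) \<in> borel_measurable lborel"
    using borel_measurable_continuous_onI[OF continuous_on_mult[OF gd_cont w_cont]] by simp
  have i3: "integrable lborel (\<lambda>y. Kc (0::'a) * w y)" using w_int by simp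
  have bnd: "\<And>n. AE y in lborel. norm (gauss_density s (xs n) y * w y) \<le> Kc (0::'a) * w y"
  proof (rule AE_I2)
    fix y n
    have "norm (gauss_density s (xs n) y * w y) = gauss_density s (xs n) y * w y"
      using gd_pos[of "xs n" y] w_pos[of y] by simp
    also have "\<dots> \<le> Kc (xs n) * w y" using gd_le[of "xs n" y] w_pos[of y] by (intro mult_right_mono) auto
    finally show "norm (gauss_density s (xs n) y * w y) \<le> Kc (0::'a) * w y" using Kc_const[of "xs n" 0] by simp
  qed
  have "(\<lambda>n. integral\<^sup>L lborel (\<lambda>y. gauss_density s (xs n) y * w y)) \<longlonglongrightarrow> integral\<^sup>L lborel (\<lambda>y. 0::real)"
    using integral_dominated_convergence[OF m1 m2 i3 lim bnd] by simp
  then show ?thesis unfolding Z_eq by simp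
qed

lemma phi_coercive: "\<exists>R. \<forall>x::'a. norm x > R \<longrightarrow> phi x > phi 0"
proof (rule ccontr)
  assume "\<not> ?thesis"
  then have "\<forall>n::nat. \<exists>x::'a. norm x > real n \<and> phi x \<le> phi 0" by (auto simp: not_less)
  then obtain xs :: "nat \<Rightarrow> 'a" where xs: "\<And>n. norm (xs n) > real n" "\<And>n. phi (xs n) \<le> phi 0" by metis
  have zz: "Z 0 \<le> Z (xs n)" for n
  proof -
    have "- del * ln (Z (xs n)) \<le> - del * ln (Z 0)" using xs(2)[of n] unfolding phi_eq .
    then have "ln (Z 0) \<le> ln (Z (xs n))" using del by simp
    then show ?thesis using Z_pos[of 0] Z_pos[of "xs n"] by simp
  qed
  have "(\<lambda>n. Z (xs n)) \<longlonglongrightarrow> 0" by (rule Z_vanish) (use xs(1) in \<open>auto intro: less_imp_le\<close>)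
  then have "Z 0 \<le> 0" by (rule LIMSEQ_le_const) (use zz in auto)
  then show False using Z_pos[of 0] by simp
qed

lemma unit_dir: obtains u :: 'a where "norm u = 1" "inner x u = norm x"
proof (cases "x = 0")
  case True
  obtain b :: 'a where "b \<in> Basis" using nonempty_Basis by blast
  then have "norm b = 1" by simp
  then show ?thesis using that True by simp
next
  case False
  define u where "u = (1 / norm x) *\<^sub>R x"
  have "norm u = 1" unfolding u_def using False by simp
  moreover have "inner x u = norm x" unfolding u_def using False by (simp add: power2_norm_eq_inner[symmetric] power2_eq_square)
  ultimately show ?thesis using that by blast
qed

lemma psi_lower: "\<exists>C. \<forall>x::'a. (norm x)\<^sup>2 / 2 - lam * phi x - inner x p \<ge> norm x + C"
proof -
  define r where "r = norm p + 2"
  have r2: "r \<ge> 2" unfolding r_def by simp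
  have cc: "continuous_on (cball (0::'a) (r+1)) f" using fc by (rule continuous_on_subset) auto
  have ne: "cball (0::'a) (r+1) \<noteq> {}" using r2 by auto
  obtain ym where ym: "ym \<in> cball (0::'a) (r + 1)" "\<forall>y\<in>cball 0 (r + 1). f y \<le> f ym"
    using continuous_attains_sup[OF compact_cball ne cc] by blast
  define mw where "mw = exp (- f ym / del)"
  have mw_pos: "mw > 0" unfolding mw_def by simp
  have wlow: "w y \<ge> mw" if "y \<in> cball 0 (r + 1)" for y
    unfolding w_def mw_def using ym(2) that del by (simp add: divide_right_mono)
  define V where "V = measure lborel (ball (0::'a) 1)"
  have V_eq: "measure lborel (ball c 1) = V" for c :: 'a unfolding V_def by (simp add: content_ball)
  have V_pos: "V > 0" unfolding V_def by (simp add: content_ball)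
  define C0 where "C0 = s * ln (Kc (0::'a) * mw * V) - (r + 1)\<^sup>2 / 2"
  show ?thesis
  proof (intro exI allI)
    fix x :: 'a
    obtain u :: 'a where u: "norm u = 1" "inner x u = norm x" by (rule unit_dir)
    define c where "c = r *\<^sub>R u"
    define Q where "Q = (r + 1)\<^sup>2 - 2 * (r - 1) * norm x + (norm x)\<^sup>2"
    define E where "E = Kc (0::'a) * exp (- Q / (2 * s))"
    have E_pos: "E > 0" unfolding E_def using Kc_pos by simp
    have pw: "gauss_density s x y * w y \<ge> (E * mw) * indicator (ball c 1) y" for y
    proof (cases "y \<in> ball c 1")
      case False
      then show ?thesis using gd_pos[of x y] w_pos[of y] by simp
    next
      case True
      then have yc: "norm (y - c) < 1" by (simp add: dist_norm norm_minus_commute)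
      have nc: "norm c = r" unfolding c_def using u r2 by simp
      have ny: "norm y \<le> r + 1" using yc nc norm_triangle_sub[of y c] by linarith
      then have yb: "y \<in> cball 0 (r + 1)" by simp
      have ixc: "inner x c = r * norm x" unfolding c_def using u by simp
      have "inner x (y - c) \<ge> - (norm x * norm (y - c))"
        using norm_cauchy_schwarz[of x "c - y"] by (simp add: inner_diff_right norm_minus_commute)
      moreover have "norm x * norm (y - c) \<le> norm x * 1" using yc by (intro mult_left_mono) auto
      ultimately have "inner x (y - c) \<ge> - norm x" by linarith
      then have ixy: "inner x y \<ge> (r - 1) * norm x"
        using ixc by (simp add: inner_diff_right algebra_simps)
      have "(norm y)\<^sup>2 \<le> (r + 1)\<^sup>2" using ny by (intro power_mono) auto
      moreover have "(norm (y - x))\<^sup>2 = (norm y)\<^sup>2 - 2 * inner x y + (norm x)\<^sup>2"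
        by (simp add: power2_norm_eq_inner inner_diff_left inner_diff_right inner_commute)
      ultimately have nyx: "(norm (y - x))\<^sup>2 \<le> Q" unfolding Q_def using ixy by linarith
      have "exp (- Q / (2 * s)) \<le> exp (- (norm (y - x))\<^sup>2 / (2 * s))"
        using nyx s_pos by (simp add: divide_right_mono)
      then have "E \<le> gauss_density s x y"
        unfolding E_def gd_eq using Kc_const[of x 0] Kc_pos[of 0] by (simp add: mult_left_mono)
      moreover have "mw \<le> w y" by (rule wlow[OF yb])
      ultimately have "E * mw \<le> gauss_density s x y * w y"
        using E_pos mw_pos by (intro mult_mono) auto
      then show ?thesis using True by simp
    qed
    have ib: "integrable lborel (\<lambda>y. (E * mw) * indicator (ball c 1) y)"
      by (intro integrable_mult_right integrable_real_indicator) (use emeasure_lborel_ball_finite[of c 1] in \<open>auto simp: top_ennreal.rep_eq\<close>)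
    have "(\<integral>y. (E * mw) * indicator (ball c 1) y \<partial>lborel) \<le> Z x"
      unfolding Z_eq by (rule integral_mono[OF ib int1]) (use pw in auto)
    moreover have "(\<integral>y. (E * mw) * indicator (ball c 1) y \<partial>lborel) = E * mw * V"
      using V_eq[of c] by simp
    ultimately have zl: "E * mw * V \<le> Z x" by linarith
    have pos: "0 < E * mw * V" using E_pos mw_pos V_pos by simp
    have "ln (E * mw * V) \<le> ln (Z x)" using ln_le_cancel_iff[OF pos Z_pos[of x]] zl by blast
    moreover have "ln (E * mw * V) = ln (Kc (0::'a) * mw * V) - Q / (2 * s)"
      unfolding E_def using Kc_pos[of 0] mw_pos V_pos by (simp add: ln_mult)
    ultimately have lz: "ln (Kc (0::'a) * mw * V) - Q / (2 * s) \<le> ln (Z x)" by simp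
    have "s * (ln (Kc (0::'a) * mw * V) - Q / (2 * s)) \<le> s * ln (Z x)"
      using lz s_pos by (intro mult_left_mono) auto
    then have sl: "s * ln (Kc (0::'a) * mw * V) - Q / 2 \<le> s * ln (Z x)"
      using s_pos by (simp add: right_diff_distrib)
    have lp: "lam * phi x = - s * ln (Z x)" unfolding phi_eq s_def by simp
    have ip: "inner x p \<le> norm x * norm p" using norm_cauchy_schwarz[of x p] by simp
    have q2: "Q / 2 = (r + 1)\<^sup>2 / 2 + (norm x)\<^sup>2 / 2 - norm x - norm x * norm p"
      unfolding Q_def r_def by (simp add: algebra_simps add_divide_distrib diff_divide_distrib)
    have "norm x + C0 \<le> (norm x)\<^sup>2 / 2 + s * ln (Z x) - inner x p"
      using sl ip q2 unfolding C0_def by linarith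
    then show "(norm x)\<^sup>2 / 2 - lam * phi x - inner x p \<ge> norm x + C0" unfolding lp by simp
  qed
qed

end


lemma exists_min_coercive:
  fixes F :: "'a::euclidean_space \<Rightarrow> real"
  assumes c: "continuous_on UNIV F" and co: "\<And>x. norm x > R \<Longrightarrow> F x > F 0"
  shows "\<exists>m. \<forall>y. F m \<le> F y"
proof -
  define K where "K = cball (0::'a) (max R 0)"
  have "K \<noteq> {}" unfolding K_def by auto
  moreover have "compact K" unfolding K_def by simp
  moreover have "continuous_on K F" using c by (rule continuous_on_subset) simp
  ultimately obtain m where m: "m \<in> K" "\<forall>y\<in>K. F m \<le> F y" using continuous_attains_inf by blast
  have "F m \<le> F y" for y
  proof (cases "y \<in> K")
    case True then show ?thesis using m by blast
  next
    case False
    then have "norm y > R" unfolding K_def by simp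
    then have "F y > F 0" by (rule co)
    moreover have "0 \<in> K" unfolding K_def by simp
    ultimately show ?thesis using m by force
  qed
  then show ?thesis by blast
qed

context zset
begin

lemma main_result:
  assumes cvx: "convex_on UNIV (soft_moreau lam del f)"
  shows "(\<exists>H :: 'a \<Rightarrow> real. convex_on UNIV H \<and> zprox del lam f = prox (lam * del) H)
    \<and> firmly_nonexpansive (zprox del lam f)
    \<and> (\<exists>xs \<in> argmin_set (soft_moreau lam del f). zoppa del lam f x0 \<longlonglongrightarrow> xs)
    \<and> (\<forall>k::nat. k \<ge> 1 \<longrightarrow>
         soft_moreau lam del f (zoppa del lam f x0 k) - (INF y. soft_moreau lam del f y)
           \<le> (infdist x0 (argmin_set (soft_moreau lam del f)))\<^sup>2 / (2 * lam * real k))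
    \<and> (\<forall>k::nat. k \<ge> 1 \<longrightarrow>
         (\<exists>g. (soft_moreau lam del f has_derivative (\<lambda>h. inner g h)) (at (zoppa del lam f x0 k))
              \<and> norm g \<le> 2 * infdist x0 (argmin_set (soft_moreau lam del f)) / (lam * (real k + 1))))"
proof -
  have phiE: "phi = soft_moreau lam del f" unfolding phi_def[abs_def] ..
  interpret sc: smooth_cvx phi g lam
  proof
    show "lam > 0" by (rule lam)
    show "convex_on UNIV phi" unfolding phiE by (rule cvx)
    show "\<And>x z. phi z \<le> phi x + inner (g x) (z - x) + (norm (z - x))\<^sup>2 / (2*lam)" by (rule descent)
  qed
  have TopE: "sc.Top = zprox del lam f"
  proof
    fix x
    show "sc.Top x = zprox del lam f x" unfolding sc.Top_def g_def T_def using lam by simp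
  qed
  have surj: "\<exists>x. sc.Top x = p" for p
  proof -
    obtain C where C: "\<forall>x::'a. (norm x)\<^sup>2 / 2 - lam * phi x - inner x p \<ge> norm x + C"
      using psi_lower[of p] by blast
    define F where "F x = sc.psi x - inner x p" for x
    have Fc: "continuous_on UNIV F" unfolding F_def sc.psi_def[abs_def]
      by (intro continuous_intros sc.cont) auto
    have "\<And>x. norm x > F 0 - C \<Longrightarrow> F x > F 0"
    proof -
      fix x :: 'a assume "norm x > F 0 - C"
      moreover have "F x \<ge> norm x + C" using C unfolding F_def sc.psi_def by simp
      ultimately show "F x > F 0" by linarith
    qed
    then obtain m where m: "\<forall>y. F m \<le> F y" using exists_min_coercive[OF Fc] by blast
    define d where "d = sc.Top m - p"
    define z where "z = m - d"
    have u: "sc.psi z \<le> sc.psi m + inner (sc.Top m) (z - m) + (norm (z - m))\<^sup>2 / 2" by (rule sc.psi_up)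
    have "F z \<le> F m - (norm d)\<^sup>2 / 2"
    proof -
      have "inner (sc.Top m) (z - m) - inner z p + inner m p = - (norm d)\<^sup>2"
        unfolding z_def d_def by (simp add: inner_diff_left inner_diff_right power2_norm_eq_inner inner_commute algebra_simps)
      moreover have "(norm (z - m))\<^sup>2 = (norm d)\<^sup>2" unfolding z_def by simp
      ultimately show ?thesis using u unfolding F_def by linarith
    qed
    moreover have "F m \<le> F z" using m by blast
    ultimately have "(norm d)\<^sup>2 \<le> 0" by linarith
    then have "d = 0" by simp
    then show ?thesis unfolding d_def by auto
  qed
  have part1: "\<exists>H :: 'a \<Rightarrow> real. convex_on UNIV H \<and> zprox del lam f = prox (lam * del) H"
  proof (intro exI conjI)
    show "convex_on UNIV (\<lambda>p. sc.cH p / (lam * del))"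
      using sc.cH_convex[OF surj] lam del by (intro convex_on_cdiv) auto
    show "zprox del lam f = prox (lam * del) (\<lambda>p. sc.cH p / (lam * del))"
      using sc.prox_eq[OF surj, of "lam * del"] lam del TopE by simp
  qed
  have part2: "firmly_nonexpansive (zprox del lam f)" using sc.fne unfolding TopE .
  have exm: "\<exists>m. \<forall>y. phi m \<le> phi y"
  proof -
    obtain R where R: "\<forall>x::'a. norm x > R \<longrightarrow> phi x > phi 0" using phi_coercive by blast
    show ?thesis using exists_min_coercive[OF sc.cont] R by blast
  qed
  have zo: "zoppa del lam f x0 k = (sc.Top ^^ k) x0" for k unfolding zoppa_def TopE ..
  have gm: "(\<exists>xs \<in> argmin_set phi. (\<lambda>k. (sc.Top ^^ k) x0) \<longlonglongrightarrow> xs)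
    \<and> (\<forall>k::nat. k \<ge> 1 \<longrightarrow> phi ((sc.Top ^^ k) x0) - (INF y. phi y)
           \<le> (infdist x0 (argmin_set phi))\<^sup>2 / (2 * lam * real k))
    \<and> (\<forall>k::nat. k \<ge> 1 \<longrightarrow> norm (g ((sc.Top ^^ k) x0)) \<le> 2 * infdist x0 (argmin_set phi) / (lam * (real k + 1)))"
    by (rule sc.gd_main[OF exm])
  have part5: "\<forall>k::nat. k \<ge> 1 \<longrightarrow>
         (\<exists>gg. (phi has_derivative (\<lambda>h. inner gg h)) (at ((sc.Top ^^ k) x0))
              \<and> norm gg \<le> 2 * infdist x0 (argmin_set phi) / (lam * (real k + 1)))"
    using gm sc.deriv by blast
  show ?thesis using part1 part2 gm part5 unfolding zo[abs_def] phiE by simp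
qed

end

theorem theorem5:
  fixes f :: "'a::euclidean_space \<Rightarrow> real" and lam del :: real and x0 :: 'a
  assumes lam: "lam > 0" and del: "del > 0"
    and A1_cont: "continuous_on UNIV f"
    and A1_min: "\<exists>xm. \<forall>y. f xm \<le> f y"
    and A2: "integrable lborel (\<lambda>y. exp (- f y / del))"
    and cvx: "convex_on UNIV (soft_moreau lam del f)"
  shows "(\<exists>H :: 'a \<Rightarrow> real. convex_on UNIV H \<and> zprox del lam f = prox (lam * del) H)
    \<and> firmly_nonexpansive (zprox del lam f)
    \<and> (\<exists>xs \<in> argmin_set (soft_moreau lam del f). zoppa del lam f x0 \<longlonglongrightarrow> xs)
    \<and> (\<forall>k::nat. k \<ge> 1 \<longrightarrow>
         soft_moreau lam del f (zoppa del lam f x0 k) - (INF y. soft_moreau lam del f y)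
           \<le> (infdist x0 (argmin_set (soft_moreau lam del f)))\<^sup>2 / (2 * lam * real k))
    \<and> (\<forall>k::nat. k \<ge> 1 \<longrightarrow>
         (\<exists>g. (soft_moreau lam del f has_derivative (\<lambda>h. inner g h)) (at (zoppa del lam f x0 k))
              \<and> norm g \<le> 2 * infdist x0 (argmin_set (soft_moreau lam del f)) / (lam * (real k + 1))))"
  proof -
  interpret z: zset f lam del
    using lam del A1_cont A1_min A2 by unfold_locales auto
  show ?thesis by (rule z.main_result[OF cvx])
qed

end
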